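(* Let $K$ be a field and let $S$ be a semigroup with presentation $sgp\langle X\mid R\rangle$ (so $R\subseteq X^\dagger\times X^\dagger$ and the natural morphism $X^\dagger\to S$ induces an isomorphism from $X^\dagger$ modulo the congruence generated by $R$ onto $S$). Let $P:=\{l-r : (l,r)\in R\}\subseteq K[X^\dagger]$, let $Q\subseteq K[X^\dagger]$, and let $Q'$ be the image of $Q$ under the natural morphism $K[X^\dagger]\to K[S]$. Define the mixed set $F$ with tagged part $\dashv\! Q=\{\dashv\! q : q\in Q\}$ and untagged part $P$. Then there is a bijection of sets $$\frac{K[S]}{\langle Q'\rangle^r}\;\cong\;\frac{K[\dashv\! X^\dagger]}{\stackrel{*}{\leftrightarrow}_F},$$ where $\langle Q'\rangle^r$ is the right ideal of the semigroup algebra $K[S]$ generated by $Q'$ and $K[S]/\langle Q'\rangle^r$ is the set of classes of $K[S]$ under $a\sim b\iff a-b\in\langle Q'\rangle^r$.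
   Context: $K[S]$ is the semigroup algebra of $S$ over $K$. $X^\dagger$ is the free semigroup of nonempty words on $X$, $X^*$ the free monoid (empty word $id$), and $K[X^\dagger]$ the free noncommutative $K$-algebra. A semigroup well-ordering $>$ on $X^\dagger$ is fixed: a well-ordering with $m_1>m_2 \Rightarrow um_1v>um_2v$ for all $u,v\in X^*$. For a nonzero polynomial, $\mathtt{LT}$ is its largest term w.r.t. $>$ and $\mathtt{LC}$ its coefficient. Tagged polynomials: $\dashv$ is a symbol; $K[\dashv\! X^\dagger]$ is the $K$-vector space with basis the tagged terms $\dashv\! m$ ($m\in X^\dagger$), a right $K[X^\dagger]$-module via $(\dashv\! m)w=\dashv\!(mw)$. For $p=\sum k_im_i\in K[X^\dagger]$ and $w\in X^*$, $\dashv\! w\,p:=\sum k_i\dashv\!(wm_i)$ and $\dashv\! p:=\dashv\! id\,p$. Tagged terms are ordered by $\dashv\! m_1>\dashv\! m_2\iff m_1>m_2$. Reduction: for a mixed set $F=(F_T,F_P)$, $F_T\subseteq K[\dashv\! X^\dagger]$ (tagged part), $F_P\subseteq K[X^\dagger]$ (untagged part), zero elements ignored, the relation $\to_F$ on $K[\dashv\! X^\dagger]$ is: $f\to_F f-\frac{k}{\mathtt{LC}(f_i)}f_iv$ if $f_i\in F_T$, $v\in X^*$ and $\mathtt{LT}(f_i)v$ occurs in $f$ with coefficient $k\neq0$; and $f\to_F f-\frac{k}{\mathtt{LC}(f_i)}\dashv\! w\,f_i\,v$ if $f_i\in F_P$, $w,v\in X^*$ and $\dashv\!(w\,\mathtt{LT}(f_i)\,v)$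 occurs in $f$ with coefficient $k\neq0$. (The paper normalizes all polynomials to be monic.) $\stackrel{*}{\leftrightarrow}_F$ is the reflexive, symmetric, transitive closure of $\to_F$. *)

theory Defs
  imports Main "HOL-Library.Function_Algebras"
begin

text \<open>Words over the alphabet 'x are lists; X-dagger = nonempty lists, X-star = all lists
  (the empty list is the empty word id).  Polynomials in K[X-dagger] and tagged polynomials
  in K[tag X-dagger] are both represented by their coefficient functions on words, finitely
  supported on nonempty words (the tag map is the identity on coefficient functions).\<close>

definition fin_poly :: "('x list \<Rightarrow> 'k::zero) set" where
  "fin_poly = {f. finite {m. f m \<noteq> 0} \<and> f [] = 0}"

definition semigroup_wellorder :: "('x list \<Rightarrow> 'x list \<Rightarrow> bool) \<Rightarrow> bool" where
  "semigroup_wellorder gt \<longleftrightarrow>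
     (\<forall>a b. gt a b \<longrightarrow> a \<noteq> [] \<and> b \<noteq> []) \<and>
     (\<forall>a b c. gt a b \<longrightarrow> gt b c \<longrightarrow> gt a c) \<and>
     (\<forall>a b. a \<noteq> [] \<longrightarrow> b \<noteq> [] \<longrightarrow> gt a b \<or> a = b \<or> gt b a) \<and>
     wf {(b, a). gt a b} \<and>
     (\<forall>m1 m2 u v. gt m1 m2 \<longrightarrow> gt (u @ m1 @ v) (u @ m2 @ v))"

definition LT :: "('x list \<Rightarrow> 'x list \<Rightarrow> bool) \<Rightarrow> ('x list \<Rightarrow> 'k::zero) \<Rightarrow> 'x list" where
  "LT gt f = (THE m. f m \<noteq> 0 \<and> (\<forall>m'. f m' \<noteq> 0 \<and> m' \<noteq> m \<longrightarrow> gt m m'))"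

definition LC :: "('x list \<Rightarrow> 'x list \<Rightarrow> bool) \<Rightarrow> ('x list \<Rightarrow> 'k::zero) \<Rightarrow> 'k" where
  "LC gt f = f (LT gt f)"

text \<open>w p v : the polynomial sum k_i (w m_i v); for tagged polynomials this is
  tag w p v, and with w = [] it is the right module action f v.\<close>
definition wrap :: "'x list \<Rightarrow> ('x list \<Rightarrow> 'k::zero) \<Rightarrow> 'x list \<Rightarrow> 'x list \<Rightarrow> 'k" where
  "wrap w p v = (\<lambda>m. if \<exists>u. m = w @ u @ v then p (THE u. m = w @ u @ v) else 0)"

definition scal :: "'k::times \<Rightarrow> ('a \<Rightarrow> 'k) \<Rightarrow> 'a \<Rightarrow> 'k" where
  "scal c f = (\<lambda>m. c * f m)"

text \<open>One-step reduction w.r.t. the mixed set F = (FT, FP); zero elements ignored.\<close>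
definition red :: "('x list \<Rightarrow> 'x list \<Rightarrow> bool) \<Rightarrow> ('x list \<Rightarrow> 'k::field) set \<Rightarrow>
    ('x list \<Rightarrow> 'k) set \<Rightarrow> (('x list \<Rightarrow> 'k) \<times> ('x list \<Rightarrow> 'k)) set" where
  "red gt FT FP = {(f, g).
     (\<exists>fi\<in>FT. fi \<noteq> 0 \<and> (\<exists>v. f (LT gt fi @ v) \<noteq> 0 \<and>
        g = f - scal (f (LT gt fi @ v) / LC gt fi) (wrap [] fi v))) \<or>
     (\<exists>fi\<in>FP. fi \<noteq> 0 \<and> (\<exists>w v. f (w @ LT gt fi @ v) \<noteq> 0 \<and>
        g = f - scal (f (w @ LT gt fi @ v) / LC gt fi) (wrap w fi v)))}"

definition red_equiv :: "('x list \<Rightarrow> 'x list \<Rightarrow> bool) \<Rightarrow> ('x list \<Rightarrow> 'k::field) set \<Rightarrow>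
    ('x list \<Rightarrow> 'k) set \<Rightarrow> (('x list \<Rightarrow> 'k) \<times> ('x list \<Rightarrow> 'k)) set" where
  "red_equiv gt FT FP = {(f, g). f \<in> fin_poly \<and> g \<in> fin_poly \<and>
      (f, g) \<in> (red gt FT FP \<union> (red gt FT FP)\<inverse>)\<^sup>*}"

definition cong_step :: "('x list \<times> 'x list) set \<Rightarrow> ('x list \<times> 'x list) set" where
  "cong_step R = {(u @ l @ v, u @ r @ v) | u l r v. (l, r) \<in> R}"

definition cong_gen :: "('x list \<times> 'x list) set \<Rightarrow> ('x list \<times> 'x list) set" where
  "cong_gen R = (cong_step R \<union> (cong_step R)\<inverse>)\<^sup>*"

definition sg_alg :: "('s \<Rightarrow> 'k::zero) set" where
  "sg_alg = {a. finite {s. a s \<noteq> 0}}"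

definition sg_mult :: "('s::semigroup_mult \<Rightarrow> 'k::comm_ring_1) \<Rightarrow> ('s \<Rightarrow> 'k) \<Rightarrow> 's \<Rightarrow> 'k" where
  "sg_mult a b = (\<lambda>s. \<Sum>(s1, s2)\<in>{(s1, s2). a s1 \<noteq> 0 \<and> b s2 \<noteq> 0 \<and> s1 * s2 = s}. a s1 * b s2)"

definition alg_map :: "('x list \<Rightarrow> 's) \<Rightarrow> ('x list \<Rightarrow> 'k::comm_ring_1) \<Rightarrow> 's \<Rightarrow> 'k" where
  "alg_map \<phi> p = (\<lambda>s. \<Sum>m\<in>{m. p m \<noteq> 0 \<and> \<phi> m = s}. p m)"

inductive_set right_ideal :: "('s::semigroup_mult \<Rightarrow> 'k::field) set \<Rightarrow> ('s \<Rightarrow> 'k) set"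
  for G where
  gen: "g \<in> G \<Longrightarrow> g \<in> right_ideal G"
| zero: "0 \<in> right_ideal G"
| add: "a \<in> right_ideal G \<Longrightarrow> b \<in> right_ideal G \<Longrightarrow> a + b \<in> right_ideal G"
| smult: "a \<in> right_ideal G \<Longrightarrow> scal c a \<in> right_ideal G"
| rmult: "a \<in> right_ideal G \<Longrightarrow> b \<in> sg_alg \<Longrightarrow> sg_mult a b \<in> right_ideal G"

definition word_monom :: "'x list \<Rightarrow> 'x list \<Rightarrow> 'k::zero_neq_one" where
  "word_monom m = (\<lambda>m'. if m' = m then 1 else 0)"

end

theory Submission
  imports Defs
begin

abbreviation supp :: "('a \<Rightarrow> 'k::zero) \<Rightarrow> 'a set" where
  "supp f \<equiv> {m. f m \<noteq> 0}"

definition sdelta :: "'s \<Rightarrow> 's \<Rightarrow> 'k::zero_neq_one" where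
  "sdelta t = (\<lambda>s. if s = t then 1 else 0)"

lemma wrap_app: "wrap w (p :: 'x list \<Rightarrow> 'k::field) v (w @ u @ v) = p u"
  unfolding wrap_def by auto

lemma wrap_not: "\<not> (\<exists>u. m = w @ u @ v) \<Longrightarrow> wrap w (p :: 'x list \<Rightarrow> 'k::field) v m = 0"
  unfolding wrap_def by auto

lemma wrap_cases:
  "(\<exists>u. m = w @ u @ v \<and> wrap w (p :: 'x list \<Rightarrow> 'k::field) v m = p u) \<or> ((\<nexists>u. m = w @ u @ v) \<and> wrap w p v m = 0)"
proof (cases "\<exists>u. m = w @ u @ v")
  case True
  then obtain u where "m = w @ u @ v" by blast
  then show ?thesis using wrap_app[where w=w and p=p and v=v and u=u] by blast
next
  case False
  then show ?thesis using wrap_not[OF False, of p] by blast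
qed

lemma wrap_supp: "supp (wrap w (p :: 'x list \<Rightarrow> 'k::field) v) \<subseteq> (\<lambda>u. w @ u @ v) ` supp p"
proof
  fix m assume "m \<in> supp (wrap w p v)"
  then show "m \<in> (\<lambda>u. w @ u @ v) ` supp p"
    using wrap_cases[of m w v p] by auto
qed

lemma wrap_fin: "(p :: 'x list \<Rightarrow> 'k::field) \<in> fin_poly \<Longrightarrow> wrap w p v \<in> fin_poly"
proof -
  assume p: "p \<in> fin_poly"
  have "finite (supp (wrap w p v))"
  proof (rule finite_subset[OF wrap_supp])
    show "finite ((\<lambda>u. w @ u @ v) ` supp p)" using p unfolding fin_poly_def by simp
  qed
  moreover have "wrap w p v [] = 0"
    using wrap_cases[of "[]" w v p] p unfolding fin_poly_def by auto
  ultimately show ?thesis unfolding fin_poly_def by auto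
qed

lemma wrap_nil: "wrap [] (p :: 'x list \<Rightarrow> 'k::field) [] = p"
  using wrap_app[where w="[]" and p=p and v="[]"] by (auto simp: fun_eq_iff)

lemma wrap_wrap: "wrap [] (wrap w (p :: 'x list \<Rightarrow> 'k::field) v') v = wrap w p (v' @ v)"
proof (rule ext)
  fix m
  show "wrap [] (wrap w p v') v m = wrap w p (v' @ v) m"
  proof (cases "\<exists>u. m = w @ u @ v' @ v")
    case True
    then obtain u where u: "m = w @ u @ v' @ v" by blast
    have "wrap [] (wrap w p v') v m = wrap w p v' (w @ u @ v')"
      using wrap_app[where w="[]" and p="wrap w p v'" and u="w @ u @ v'" and v=v] u by simp
    also have "\<dots> = p u" by (rule wrap_app)
    finally show ?thesis using u wrap_app[where w=w and p=p and v="v' @ v" and u=u] by simp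
  next
    case False
    then have r: "wrap w p (v' @ v) m = 0" by (intro wrap_not) auto
    show ?thesis
    proof (cases "\<exists>u. m = [] @ u @ v")
      case True
      then obtain u where u: "m = u @ v" by auto
      have "wrap [] (wrap w p v') v m = wrap w p v' u"
        using wrap_app[where w="[]" and p="wrap w p v'" and u=u and v=v] u by simp
      also have "\<dots> = 0" using False u by (intro wrap_not) auto
      finally show ?thesis using r by simp
    next
      case False
      then show ?thesis using r wrap_not by metis
    qed
  qed
qed

lemma wrap_add: "wrap w (a + b :: 'x list \<Rightarrow> 'k::field) v = wrap w a v + wrap w b v"
  unfolding wrap_def by (auto simp: fun_eq_iff)

lemma wrap_scal: "wrap w (scal c a :: 'x list \<Rightarrow> 'k::field) v = scal c (wrap w a v)"
  unfolding wrap_def scal_def by (auto simp: fun_eq_iff)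

lemma wrap_zero: "wrap w (0 :: 'x list \<Rightarrow> 'k::field) v = 0"
  unfolding wrap_def by (auto simp: fun_eq_iff)

lemma wrap_monom:
  "wrap w (word_monom l - word_monom r :: 'x list \<Rightarrow> 'k::field) v = word_monom (w @ l @ v) - word_monom (w @ r @ v)"
proof (rule ext)
  fix m
  show "wrap w (word_monom l - word_monom r :: 'x list \<Rightarrow> 'k::field) v m = (word_monom (w @ l @ v) - word_monom (w @ r @ v)) m"
  proof (cases "\<exists>u. m = w @ u @ v")
    case True
    then obtain u where u: "m = w @ u @ v" by blast
    show ?thesis unfolding u wrap_app by (simp add: word_monom_def)
  next
    case False
    then show ?thesis using wrap_not[OF False] by (auto simp: word_monom_def)
  qed
qed

lemma fin_poly_add: "(a :: 'x list \<Rightarrow> 'k::field) \<in> fin_poly \<Longrightarrow> b \<in> fin_poly \<Longrightarrow> a + b \<in> fin_poly"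
proof -
  assume a: "a \<in> fin_poly" and b: "b \<in> fin_poly"
  have "supp (a + b) \<subseteq> supp a \<union> supp b" by auto
  then show ?thesis using a b unfolding fin_poly_def by (auto intro: finite_subset)
qed

lemma fin_poly_scal: "(a :: 'x list \<Rightarrow> 'k::field) \<in> fin_poly \<Longrightarrow> scal c a \<in> fin_poly"
proof -
  assume a: "a \<in> fin_poly"
  have "supp (scal c a) \<subseteq> supp a" by (auto simp: scal_def)
  then show ?thesis using a unfolding fin_poly_def by (auto intro: finite_subset simp: scal_def)
qed

lemma fin_poly_zero: "(0 :: 'x list \<Rightarrow> 'k::field) \<in> fin_poly"
  unfolding fin_poly_def by auto

lemma fin_poly_diff: "(a::'x list \<Rightarrow> 'k::field) \<in> fin_poly \<Longrightarrow> b \<in> fin_poly \<Longrightarrow> a - b \<in> fin_poly"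
proof -
  assume a: "a \<in> fin_poly" and b: "b \<in> fin_poly"
  have "supp (a - b) \<subseteq> supp a \<union> supp b" by auto
  then show ?thesis using a b unfolding fin_poly_def by (auto intro: finite_subset)
qed

lemma monom_fin: "m \<noteq> [] \<Longrightarrow> (word_monom m :: 'x list \<Rightarrow> 'k::field) \<in> fin_poly"
proof -
  assume "m \<noteq> []"
  moreover have "supp (word_monom m :: 'x list \<Rightarrow> 'k) \<subseteq> {m}" by (auto simp: word_monom_def)
  ultimately show ?thesis unfolding fin_poly_def
    by (auto intro: finite_subset simp: word_monom_def)
qed


lemma sw_tot: "semigroup_wellorder gt \<Longrightarrow> a \<noteq> [] \<Longrightarrow> b \<noteq> [] \<Longrightarrow> gt a b \<or> a = b \<or> gt b a"
proof -
  assume "semigroup_wellorder gt" "a \<noteq> []" "b \<noteq> []"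
  moreover have "semigroup_wellorder gt \<Longrightarrow> (\<forall>a b. a \<noteq> [] \<longrightarrow> b \<noteq> [] \<longrightarrow> gt a b \<or> a = b \<or> gt b a)"
    unfolding semigroup_wellorder_def by (elim conjE)
  ultimately show ?thesis by blast
qed

lemma sw_trans: "semigroup_wellorder gt \<Longrightarrow> gt a b \<Longrightarrow> gt b c \<Longrightarrow> gt a c"
proof -
  assume "semigroup_wellorder gt" "gt a b" "gt b c"
  moreover have "semigroup_wellorder gt \<Longrightarrow> (\<forall>a b c. gt a b \<longrightarrow> gt b c \<longrightarrow> gt a c)"
    unfolding semigroup_wellorder_def by (elim conjE)
  ultimately show ?thesis by blast
qed

lemma gt_irrefl: "semigroup_wellorder gt \<Longrightarrow> \<not> gt a a"
proof -
  assume "semigroup_wellorder gt"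
  then have "wf {(b, a). gt a b}" unfolding semigroup_wellorder_def by (elim conjE)
  then show ?thesis using wf_not_refl[of "{(b, a). gt a b}" a] by simp
qed

lemma max_ex:
  assumes gt: "semigroup_wellorder gt" and "finite S" "S \<noteq> {}" "\<forall>a\<in>S. a \<noteq> []"
  shows "\<exists>m\<in>S. \<forall>m'\<in>S. m' \<noteq> m \<longrightarrow> gt m m'"
  using assms(2,3,4)
proof (induction S rule: finite_ne_induct)
  case (singleton x)
  then show ?case by auto
next
  case (insert x S)
  then obtain m where m: "m \<in> S" "\<forall>m'\<in>S. m' \<noteq> m \<longrightarrow> gt m m'" by auto
  have xm: "x \<noteq> m" using m insert by auto
  have ne: "x \<noteq> []" "m \<noteq> []" using insert m by auto
  have tot: "gt x m \<or> gt m x" using sw_tot[OF gt ne] xm by blast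
  have tr: "\<And>a b c. gt a b \<Longrightarrow> gt b c \<Longrightarrow> gt a c" using sw_trans[OF gt] by blast
  show ?case
  proof (cases "gt x m")
    case True
    have "\<forall>m'\<in>insert x S. m' \<noteq> x \<longrightarrow> gt x m'"
    proof (intro ballI impI)
      fix m' assume "m' \<in> insert x S" "m' \<noteq> x"
      then have m'S: "m' \<in> S" by simp
      show "gt x m'"
      proof (cases "m' = m")
        case True then show ?thesis using \<open>gt x m\<close> by simp
      next
        case False then have "gt m m'" using m m'S by blast
        then show ?thesis using tr[OF \<open>gt x m\<close>] by blast
      qed
    qed
    then show ?thesis by blast
  next
    case False
    then have "gt m x" using tot by blast
    then have "\<forall>m'\<in>insert x S. m' \<noteq> m \<longrightarrow> gt m m'" using m by blast
    then show ?thesis using m by blast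
  qed
qed

lemma LT_prop:
  assumes gt: "semigroup_wellorder gt" and p: "(p :: 'x list \<Rightarrow> 'k::field) \<in> fin_poly" and nz: "p \<noteq> 0"
  shows "p (LT gt p) \<noteq> 0"
proof -
  have fin: "finite (supp p)" and p0: "p [] = 0" using p unfolding fin_poly_def by auto
  have "supp p \<noteq> {}" using nz by (auto simp: fun_eq_iff)
  moreover have "\<forall>a\<in>supp p. a \<noteq> []" using p0 by auto
  ultimately obtain m where m: "m \<in> supp p" "\<forall>m'\<in>supp p. m' \<noteq> m \<longrightarrow> gt m m'"
    using max_ex[OF gt fin] by blast
  have tr: "\<And>a b c. gt a b \<Longrightarrow> gt b c \<Longrightarrow> gt a c" using sw_trans[OF gt] by blast
  have "LT gt p = m" unfolding LT_def
  proof (rule the_equality)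
    show "p m \<noteq> 0 \<and> (\<forall>m'. p m' \<noteq> 0 \<and> m' \<noteq> m \<longrightarrow> gt m m')" using m by auto
  next
    fix m2 assume a: "p m2 \<noteq> 0 \<and> (\<forall>m'. p m' \<noteq> 0 \<and> m' \<noteq> m2 \<longrightarrow> gt m2 m')"
    show "m2 = m"
    proof (rule ccontr)
      assume "m2 \<noteq> m"
      then have "gt m2 m" "gt m m2" using a m by auto
      then show False using tr[of m2 m m2] gt_irrefl[OF gt, of m2] by blast
    qed
  qed
  then show ?thesis using m by auto
qed

lemma step_abs:
  fixes b h :: "'a \<Rightarrow> 'k::field"
  assumes bt: "b t \<noteq> 0"
    and red: "\<And>h. h t \<noteq> 0 \<Longrightarrow> (h, h - scal (h t / b t) b) \<in> Red"
  shows "(h, h + scal c b) \<in> (Red \<union> Red\<inverse>)\<^sup>*"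
proof -
  define h' where "h' = h + scal c b"
  have h't: "h' t = h t + c * b t" unfolding h'_def scal_def by simp
  show ?thesis
  proof (cases "c = 0")
    case True
    then show ?thesis by (simp add: scal_def zero_fun_def[symmetric])
  next
    case c: False
    show ?thesis
    proof (cases "h t = 0")
      case True
      then have "h' t \<noteq> 0" using h't c bt by simp
      then have "(h', h' - scal (h' t / b t) b) \<in> Red" by (rule red)
      moreover have "h' - scal (h' t / b t) b = h"
        using True bt unfolding h't by (simp add: h'_def scal_def fun_eq_iff)
      ultimately have "(h, h') \<in> Red \<union> Red\<inverse>" by auto
      then show ?thesis unfolding h'_def by auto
    next
      case ht: False
      show ?thesis
      proof (cases "h' t = 0")
        case True
        have "(h, h - scal (h t / b t) b) \<in> Red" using ht by (rule red)
        moreover have "h t = - c * b t" using True h't by (simp add: algebra_simps add_eq_0_iff)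
        then have "h - scal (h t / b t) b = h'"
          using bt by (simp add: h'_def scal_def fun_eq_iff)
        ultimately have "(h, h') \<in> Red \<union> Red\<inverse>" by auto
        then show ?thesis unfolding h'_def by auto
      next
        case h't0: False
        have 1: "(h, h - scal (h t / b t) b) \<in> Red" using ht by (rule red)
        have 2: "(h', h' - scal (h' t / b t) b) \<in> Red" using h't0 by (rule red)
        have eq: "h' - scal (h' t / b t) b = h - scal (h t / b t) b"
          unfolding h't using bt by (simp add: h'_def scal_def fun_eq_iff field_simps)
        have "(h, h - scal (h t / b t) b) \<in> (Red \<union> Red\<inverse>)\<^sup>*" using 1 by auto
        moreover have "(h - scal (h t / b t) b, h') \<in> (Red \<union> Red\<inverse>)\<^sup>*" using 2 eq by auto
        ultimately show ?thesis unfolding h'_def by (rule rtrancl_trans)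
      qed
    qed
  qed
qed


lemma alg_map_eq:
  fixes p :: "'x list \<Rightarrow> 'k::field"
  assumes "finite A" "supp p \<subseteq> A"
  shows "alg_map \<phi> p s = sum p {m\<in>A. \<phi> m = s}"
  unfolding alg_map_def
  by (rule sum.mono_neutral_left) (use assms in auto)

lemma alg_map_add:
  fixes p q :: "'x list \<Rightarrow> 'k::field"
  assumes "finite (supp p)" "finite (supp q)"
  shows "alg_map \<phi> (p + q) = alg_map \<phi> p + alg_map \<phi> q"
proof (rule ext)
  fix s
  let ?A = "supp p \<union> supp q"
  have f: "finite ?A" using assms by simp
  have "alg_map \<phi> (p + q) s = sum (p + q) {m\<in>?A. \<phi> m = s}"
    by (rule alg_map_eq[OF f]) auto
  also have "\<dots> = sum p {m\<in>?A. \<phi> m = s} + sum q {m\<in>?A. \<phi> m = s}"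
    by (simp add: sum.distrib)
  also have "\<dots> = alg_map \<phi> p s + alg_map \<phi> q s"
    using alg_map_eq[OF f, of p \<phi> s] alg_map_eq[OF f, of q \<phi> s] by auto
  finally show "alg_map \<phi> (p + q) s = (alg_map \<phi> p + alg_map \<phi> q) s" by simp
qed

lemma alg_map_scal:
  fixes p :: "'x list \<Rightarrow> 'k::field"
  assumes "finite (supp p)"
  shows "alg_map \<phi> (scal c p) = scal c (alg_map \<phi> p)"
proof (rule ext)
  fix s
  have "alg_map \<phi> (scal c p) s = sum (scal c p) {m\<in>supp p. \<phi> m = s}"
    by (rule alg_map_eq[OF assms]) (auto simp: scal_def)
  also have "\<dots> = c * sum p {m\<in>supp p. \<phi> m = s}"
    by (simp add: scal_def sum_distrib_left)
  also have "\<dots> = scal c (alg_map \<phi> p) s"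
    using alg_map_eq[OF assms, of p \<phi> s] by (simp add: scal_def)
  finally show "alg_map \<phi> (scal c p) s = scal c (alg_map \<phi> p) s" .
qed

lemma alg_map_zero: "alg_map \<phi> (0 :: 'x list \<Rightarrow> 'k::field) = 0"
  unfolding alg_map_def by (simp add: fun_eq_iff)

lemma scal_m1: "scal (-1) (f :: 'a \<Rightarrow> 'k::field) = - f"
  by (simp add: scal_def fun_eq_iff)

lemma alg_map_diff:
  fixes p q :: "'x list \<Rightarrow> 'k::field"
  assumes "finite (supp p)" "finite (supp q)"
  shows "alg_map \<phi> (p - q) = alg_map \<phi> p - alg_map \<phi> q"
proof -
  have "p - q = p + scal (-1) q" by (simp add: scal_m1)
  moreover have "finite (supp (scal (-1) q))" using assms(2) by (simp add: scal_def)
  ultimately have "alg_map \<phi> (p - q) = alg_map \<phi> p + alg_map \<phi> (scal (-1) q)"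
    using assms alg_map_add by metis
  also have "\<dots> = alg_map \<phi> p + scal (-1) (alg_map \<phi> q)"
    using alg_map_scal[OF assms(2)] by metis
  finally show ?thesis by (simp add: scal_m1)
qed

lemma alg_map_monom: "alg_map \<phi> (word_monom m :: 'x list \<Rightarrow> 'k::field) = sdelta (\<phi> m)"
proof (rule ext)
  fix s
  have "alg_map \<phi> (word_monom m :: 'x list \<Rightarrow> 'k::field) s = sum (word_monom m) {m'\<in>{m}. \<phi> m' = s}"
    by (rule alg_map_eq) (auto simp: word_monom_def)
  moreover have "{m'\<in>{m}. \<phi> m' = s} = (if \<phi> m = s then {m} else {})" by auto
  ultimately show "alg_map \<phi> (word_monom m :: 'x list \<Rightarrow> 'k::field) s = sdelta (\<phi> m) s"
    by (auto simp: word_monom_def sdelta_def)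
qed

lemma alg_map_supp: "supp (alg_map \<phi> (p :: 'x list \<Rightarrow> 'k::field)) \<subseteq> \<phi> ` supp p"
proof
  fix s assume "s \<in> supp (alg_map \<phi> p)"
  show "s \<in> \<phi> ` supp p"
  proof (rule ccontr)
    assume "s \<notin> \<phi> ` supp p"
    then have "{m. p m \<noteq> 0 \<and> \<phi> m = s} = {}" by auto
    then have "alg_map \<phi> p s = 0" unfolding alg_map_def by (simp only: sum.empty)
    then show False using \<open>s \<in> supp (alg_map \<phi> p)\<close> by simp
  qed
qed

lemma alg_map_fin: "finite (supp (p :: 'x list \<Rightarrow> 'k::field)) \<Longrightarrow> alg_map \<phi> p \<in> sg_alg"
  unfolding sg_alg_def using alg_map_supp[of \<phi> p] by (auto intro: finite_subset)

lemma sdelta_alg: "(sdelta t :: 's \<Rightarrow> 'k::field) \<in> sg_alg"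
proof -
  have "supp (sdelta t :: 's \<Rightarrow> 'k::field) \<subseteq> {t}" by (auto simp: sdelta_def)
  then show ?thesis unfolding sg_alg_def by (auto intro: finite_subset)
qed

lemma sg_mult_eq:
  fixes a b :: "'s::semigroup_mult \<Rightarrow> 'k::field"
  assumes "finite A" "finite B" "supp a \<subseteq> A" "supp b \<subseteq> B"
  shows "sg_mult a b s = (\<Sum>(x, y)\<in>{(x, y). x \<in> A \<and> y \<in> B \<and> x * y = s}. a x * b y)"
  unfolding sg_mult_def
proof (rule sum.mono_neutral_left)
  have "{(x, y). x \<in> A \<and> y \<in> B \<and> x * y = s} \<subseteq> A \<times> B" by auto
  then show "finite {(x, y). x \<in> A \<and> y \<in> B \<and> x * y = s}"
    using assms(1,2) by (auto intro: finite_subset)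
  show "{(s1, s2). a s1 \<noteq> 0 \<and> b s2 \<noteq> 0 \<and> s1 * s2 = s} \<subseteq> {(x, y). x \<in> A \<and> y \<in> B \<and> x * y = s}"
    using assms(3,4) by auto
  show "\<forall>i\<in>{(x, y). x \<in> A \<and> y \<in> B \<and> x * y = s} - {(s1, s2). a s1 \<noteq> 0 \<and> b s2 \<noteq> 0 \<and> s1 * s2 = s}.
         (case i of (s1, s2) \<Rightarrow> a s1 * b s2) = 0" by auto
qed

lemma sg_mult_add2:
  fixes a b c :: "'s::semigroup_mult \<Rightarrow> 'k::field"
  assumes "finite (supp a)" "finite (supp b)" "finite (supp c)"
  shows "sg_mult a (b + c) = sg_mult a b + sg_mult a c"
proof (rule ext)
  fix s
  let ?A = "supp a" and ?B = "supp b \<union> supp c"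
  let ?S = "{(x, y). x \<in> ?A \<and> y \<in> ?B \<and> x * y = s}"
  have f: "finite ?A" "finite ?B" using assms by auto
  have "sg_mult a (b + c) s = (\<Sum>(x, y)\<in>?S. a x * (b + c) y)"
    by (rule sg_mult_eq[OF f]) auto
  also have "\<dots> = (\<Sum>(x, y)\<in>?S. a x * b y) + (\<Sum>(x, y)\<in>?S. a x * c y)"
    by (simp add: sum.distrib[symmetric] case_prod_beta distrib_left)
  also have "\<dots> = sg_mult a b s + sg_mult a c s"
    using sg_mult_eq[OF f, of a b s] sg_mult_eq[OF f, of a c s] by auto
  finally show "sg_mult a (b + c) s = (sg_mult a b + sg_mult a c) s" by simp
qed

lemma sg_mult_scal2:
  fixes a b :: "'s::semigroup_mult \<Rightarrow> 'k::field"
  assumes "finite (supp a)" "finite (supp b)"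
  shows "sg_mult a (scal c b) = scal c (sg_mult a b)"
proof (rule ext)
  fix s
  let ?S = "{(x, y). x \<in> supp a \<and> y \<in> supp b \<and> x * y = s}"
  have "sg_mult a (scal c b) s = (\<Sum>(x, y)\<in>?S. a x * scal c b y)"
    by (rule sg_mult_eq[OF assms]) (auto simp: scal_def)
  also have "\<dots> = c * (\<Sum>(x, y)\<in>?S. a x * b y)"
    by (simp add: sum_distrib_left case_prod_beta scal_def algebra_simps)
  also have "\<dots> = scal c (sg_mult a b) s"
    using sg_mult_eq[OF assms, where a=a and b=b and s=s] by (simp add: scal_def)
  finally show "sg_mult a (scal c b) s = scal c (sg_mult a b) s" .
qed

lemma sg_mult_zero2: "sg_mult a (0 :: 's::semigroup_mult \<Rightarrow> 'k::field) = 0"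
  unfolding sg_mult_def by (simp add: fun_eq_iff)

lemma quot_bij:
  assumes FA: "F ` A = B" and sB: "s \<subseteq> B \<times> B"
    and r: "r = {(f, g). f \<in> A \<and> g \<in> A \<and> (F f, F g) \<in> s}"
  shows "\<exists>h. bij_betw h (B // s) (A // r)"
proof -
  define h where "h X = {f \<in> A. F f \<in> X}" for X
  have hcls: "h (s `` {F f0}) = r `` {f0}" if "f0 \<in> A" for f0
    using that unfolding h_def r by auto
  have XF: "X = F ` h X" if "X \<in> B // s" for X
  proof -
    have "X \<subseteq> B" using that sB unfolding quotient_def by auto
    then show ?thesis unfolding h_def using FA by auto
  qed
  have "inj_on h (B // s)"
  proof (rule inj_onI)
    fix X Y assume "X \<in> B // s" "Y \<in> B // s" "h X = h Y"
    then show "X = Y" using XF by metis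
  qed
  moreover have "h ` (B // s) = A // r"
  proof
    show "h ` (B // s) \<subseteq> A // r"
    proof
      fix Z assume "Z \<in> h ` (B // s)"
      then obtain b where b: "b \<in> B" "Z = h (s `` {b})" unfolding quotient_def by auto
      then obtain f0 where "f0 \<in> A" "b = F f0" using FA by auto
      then show "Z \<in> A // r" using b hcls unfolding quotient_def by auto
    qed
  next
    show "A // r \<subseteq> h ` (B // s)"
    proof
      fix Z assume "Z \<in> A // r"
      then obtain f0 where f0: "f0 \<in> A" "Z = r `` {f0}" unfolding quotient_def by auto
      have "F f0 \<in> B" using FA f0 by auto
      then have "s `` {F f0} \<in> B // s" unfolding quotient_def by auto
      then show "Z \<in> h ` (B // s)" using hcls[OF f0(1)] f0 by auto
    qed
  qed
  ultimately show ?thesis unfolding bij_betw_def by blast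
qed


locale cor_setup =
  fixes gt :: "'x list \<Rightarrow> 'x list \<Rightarrow> bool"
    and R :: "('x list \<times> 'x list) set"
    and \<phi> :: "'x list \<Rightarrow> 's::semigroup_mult"
    and Q :: "('x list \<Rightarrow> 'k::field) set"
  assumes gt: "semigroup_wellorder gt"
    and R_ne: "\<forall>(l, r)\<in>R. l \<noteq> [] \<and> r \<noteq> []"
    and hom: "\<forall>u v. u \<noteq> [] \<longrightarrow> v \<noteq> [] \<longrightarrow> \<phi> (u @ v) = \<phi> u * \<phi> v"
    and surj: "\<forall>s. \<exists>u. u \<noteq> [] \<and> \<phi> u = s"
    and ker: "\<forall>u v. u \<noteq> [] \<longrightarrow> v \<noteq> [] \<longrightarrow> (\<phi> u = \<phi> v \<longleftrightarrow> (u, v) \<in> cong_gen R)"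
    and Q: "Q \<subseteq> fin_poly"
begin

definition P :: "('x list \<Rightarrow> 'k) set" where
  "P = {word_monom l - word_monom r | l r. (l, r) \<in> R}"

definition W :: "('x list \<Rightarrow> 'k) set" where
  "W = {wrap [] q v | q v. q \<in> Q} \<union> {wrap w p v | w p v. p \<in> P}"

inductive_set L :: "('x list \<Rightarrow> 'k) set" where
  L0: "0 \<in> L"
| Lstep: "l \<in> L \<Longrightarrow> b \<in> W \<Longrightarrow> l + scal c b \<in> L"

abbreviation E where "E \<equiv> red gt Q P \<union> (red gt Q P)\<inverse>"

abbreviation I where "I \<equiv> right_ideal (alg_map \<phi> ` Q)"

lemma P_fin: "P \<subseteq> fin_poly"
proof
  fix p assume "p \<in> P"
  then obtain l r where p: "p = word_monom l - word_monom r" "(l, r) \<in> R" unfolding P_def by auto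
  then have "l \<noteq> []" "r \<noteq> []" using R_ne by auto
  then show "p \<in> fin_poly" unfolding p(1) by (intro fin_poly_diff monom_fin)
qed

lemma W_fin: "W \<subseteq> fin_poly"
  unfolding W_def using Q P_fin wrap_fin by blast

lemma L_fin: "l \<in> L \<Longrightarrow> l \<in> fin_poly"
proof (induction rule: L.induct)
  case L0 show ?case by (rule fin_poly_zero)
next
  case (Lstep l b c)
  have "b \<in> fin_poly" using Lstep W_fin by blast
  then show ?case using Lstep fin_poly_add fin_poly_scal by blast
qed

lemma scal_one: "scal 1 (f :: 'a \<Rightarrow> 'k) = f"
  by (simp add: scal_def)

lemma scal_scal: "scal c (scal d (f :: 'a \<Rightarrow> 'k)) = scal (c * d) f"
  by (simp add: scal_def fun_eq_iff)

lemma W_L: "b \<in> W \<Longrightarrow> b \<in> L"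
  using Lstep[OF L0, of b 1] by (simp add: scal_one)

lemma L_add: "b \<in> L \<Longrightarrow> a \<in> L \<Longrightarrow> a + b \<in> L"
proof (induction rule: L.induct)
  case L0 then show ?case by simp
next
  case (Lstep l b c)
  have "a + (l + scal c b) = (a + l) + scal c b" by (simp add: add.assoc)
  then show ?case using Lstep L.Lstep by metis
qed

lemma L_scal: "a \<in> L \<Longrightarrow> scal d a \<in> L"
proof (induction rule: L.induct)
  case L0 then show ?case by (simp add: scal_def zero_fun_def[symmetric] L.L0)
next
  case (Lstep l b c)
  have "scal d (l + scal c b) = scal d l + scal (d * c) b" by (simp add: scal_def fun_eq_iff algebra_simps)
  then show ?case using Lstep L.Lstep by metis
qed

lemma L_neg: "a \<in> L \<Longrightarrow> - a \<in> L"
  using L_scal[of a "-1"] by (simp add: scal_m1)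

lemma L_diff: "a \<in> L \<Longrightarrow> b \<in> L \<Longrightarrow> a - b \<in> L"
  using L_add[OF L_neg[of b], of a] by simp

lemma Q_step: "q \<in> Q \<Longrightarrow> (h, h + scal c (wrap [] q v)) \<in> E\<^sup>*"
proof (cases "q = 0")
  case True
  then show ?thesis by (simp add: wrap_zero scal_def zero_fun_def[symmetric])
next
  case False
  assume q: "q \<in> Q"
  have qf: "q \<in> fin_poly" using q Q by auto
  let ?t = "LT gt q @ v"
  have bt: "wrap [] q v ?t = LC gt q"
    using wrap_app[where w="[]" and p=q and v=v and u="LT gt q"] by (simp add: LC_def)
  have lc: "LC gt q \<noteq> 0" using LT_prop[OF gt qf False] by (simp add: LC_def)
  show ?thesis
  proof (rule step_abs)
    show "wrap [] q v ?t \<noteq> 0" using bt lc by simp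
    fix h' :: "'x list \<Rightarrow> 'k" assume "h' ?t \<noteq> 0"
    then show "(h', h' - scal (h' ?t / wrap [] q v ?t) (wrap [] q v)) \<in> red gt Q P"
      unfolding red_def bt using q False by blast
  qed
qed

lemma P_step: "p \<in> P \<Longrightarrow> (h, h + scal c (wrap w p v)) \<in> E\<^sup>*"
proof (cases "p = 0")
  case True
  then show ?thesis by (simp add: wrap_zero scal_def zero_fun_def[symmetric])
next
  case False
  assume p: "p \<in> P"
  have pf: "p \<in> fin_poly" using p P_fin by auto
  let ?t = "w @ LT gt p @ v"
  have bt: "wrap w p v ?t = LC gt p"
    using wrap_app[where w=w and p=p and v=v and u="LT gt p"] by (simp add: LC_def)
  have lc: "LC gt p \<noteq> 0" using LT_prop[OF gt pf False] by (simp add: LC_def)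
  show ?thesis
  proof (rule step_abs)
    show "wrap w p v ?t \<noteq> 0" using bt lc by simp
    fix h' :: "'x list \<Rightarrow> 'k" assume "h' ?t \<noteq> 0"
    then show "(h', h' - scal (h' ?t / wrap w p v ?t) (wrap w p v)) \<in> red gt Q P"
      unfolding red_def bt using p False by blast
  qed
qed

lemma W_step: "b \<in> W \<Longrightarrow> (h, h + scal c b) \<in> E\<^sup>*"
  unfolding W_def using Q_step P_step by blast

lemma L_red: "l \<in> L \<Longrightarrow> (h, h + l) \<in> E\<^sup>*"
proof (induction arbitrary: h rule: L.induct)
  case L0 then show ?case by simp
next
  case (Lstep l b c)
  have "(h, h + l) \<in> E\<^sup>*" by (rule Lstep.IH)
  moreover have "(h + l, (h + l) + scal c b) \<in> E\<^sup>*" using W_step[OF Lstep.hyps(2)] by blast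
  ultimately have "(h, (h + l) + scal c b) \<in> E\<^sup>*" by (rule rtrancl_trans)
  then show ?case by (simp only: add.assoc)
qed

lemma red_L: "(f, g) \<in> red gt Q P \<Longrightarrow> f - g \<in> L"
proof -
  assume "(f, g) \<in> red gt Q P"
  then obtain c b where "b \<in> W" "g = f - scal c b"
    unfolding red_def W_def by blast
  then show ?thesis using W_L L_scal by simp
qed

lemma E_L: "(f, g) \<in> E\<^sup>* \<Longrightarrow> g - f \<in> L"
proof (induction rule: rtrancl_induct)
  case base then show ?case by (simp only: diff_self L0)
next
  case (step y z)
  have "z - y \<in> L"
  proof (cases "(y, z) \<in> red gt Q P")
    case True
    then have "y - z \<in> L" by (rule red_L)
    then have "- (y - z) \<in> L" by (rule L_neg)
    then show ?thesis by simp
  next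
    case False
    then have "(z, y) \<in> red gt Q P" using step by auto
    then show ?thesis by (rule red_L)
  qed
  then have "(y - f) + (z - y) \<in> L" using L_add step.IH by blast
  then have "z - f \<in> L" by simp
  then show ?case by (simp add: fun_diff_def)
qed


lemma alg_map_wrap:
  assumes l: "(l :: 'x list \<Rightarrow> 'k) \<in> fin_poly" and v: "v \<noteq> []"
  shows "alg_map \<phi> (wrap [] l v) = sg_mult (alg_map \<phi> l) (sdelta (\<phi> v))"
proof (rule ext)
  fix s
  have fl: "finite (supp l)" and l0: "l [] = 0" using l unfolding fin_poly_def by auto
  let ?t = "\<phi> v"
  let ?a = "alg_map \<phi> l"
  let ?S = "{u\<in>supp l. \<phi> u * ?t = s}"
  have lhs1: "alg_map \<phi> (wrap [] l v) s = sum (wrap [] l v) {m\<in>(\<lambda>u. u @ v) ` supp l. \<phi> m = s}"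
    by (rule alg_map_eq) (use fl wrap_supp[where w="[]" and p=l and v=v] in auto)
  have "{m\<in>(\<lambda>u. u @ v) ` supp l. \<phi> m = s} = (\<lambda>u. u @ v) ` {u\<in>supp l. \<phi> (u @ v) = s}" by auto
  moreover have "inj_on (\<lambda>u. u @ v) {u\<in>supp l. \<phi> (u @ v) = s}" by (auto intro: inj_onI)
  ultimately have "sum (wrap [] l v) {m\<in>(\<lambda>u. u @ v) ` supp l. \<phi> m = s}
      = sum (\<lambda>u. wrap [] l v (u @ v)) {u\<in>supp l. \<phi> (u @ v) = s}"
    by (simp add: sum.reindex)
  also have "\<dots> = sum l {u\<in>supp l. \<phi> (u @ v) = s}"
    using wrap_app[where w="[]" and p=l and v=v] by simp
  also have "{u\<in>supp l. \<phi> (u @ v) = s} = ?S"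
  proof -
    have "\<phi> (u @ v) = \<phi> u * ?t" if "u \<in> supp l" for u
    proof -
      have "u \<noteq> []" using that l0 by auto
      then show ?thesis using hom v by blast
    qed
    then show ?thesis by auto
  qed
  finally have lhs: "alg_map \<phi> (wrap [] l v) s = sum l ?S" using lhs1 by simp
  have fa: "finite (\<phi> ` supp l)" using fl by simp
  have "sg_mult ?a (sdelta ?t) s = (\<Sum>(x, y)\<in>{(x, y). x \<in> \<phi> ` supp l \<and> y \<in> {?t} \<and> x * y = s}. ?a x * sdelta ?t y)"
    by (rule sg_mult_eq) (use fa alg_map_supp[of \<phi> l] in \<open>auto simp: sdelta_def\<close>)
  also have "{(x, y). x \<in> \<phi> ` supp l \<and> y \<in> {?t} \<and> x * y = s} = (\<lambda>x. (x, ?t)) ` {x\<in>\<phi> ` supp l. x * ?t = s}"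
    by auto
  also have "(\<Sum>(x, y)\<in>(\<lambda>x. (x, ?t)) ` {x\<in>\<phi> ` supp l. x * ?t = s}. ?a x * sdelta ?t y)
      = (\<Sum>x\<in>{x\<in>\<phi> ` supp l. x * ?t = s}. ?a x)"
    by (subst sum.reindex) (auto intro: inj_onI simp: sdelta_def)
  also have "\<dots> = (\<Sum>x\<in>{x\<in>\<phi> ` supp l. x * ?t = s}. sum l {u\<in>?S. \<phi> u = x})"
  proof (rule sum.cong)
    fix x assume x: "x \<in> {x\<in>\<phi> ` supp l. x * ?t = s}"
    have "?a x = sum l {u\<in>supp l. \<phi> u = x}" by (rule alg_map_eq[OF fl]) auto
    also have "{u\<in>supp l. \<phi> u = x} = {u\<in>?S. \<phi> u = x}" using x by auto
    finally show "?a x = sum l {u\<in>?S. \<phi> u = x}" .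
  qed simp
  also have "\<dots> = sum l ?S"
    by (rule sum.group) (use fl fa in auto)
  finally show "alg_map \<phi> (wrap [] l v) s = sg_mult ?a (sdelta ?t) s" using lhs by simp
qed

lemma W_ideal: "b \<in> W \<Longrightarrow> alg_map \<phi> b \<in> I"
proof -
  assume "b \<in> W"
  then consider (q) q v where "q \<in> Q" "b = wrap [] q v" | (p) w p v where "p \<in> P" "b = wrap w p v"
    unfolding W_def by blast
  then show ?thesis
  proof cases
    case q
    have qf: "q \<in> fin_poly" using q Q by auto
    show ?thesis
    proof (cases "v = []")
      case True
      then show ?thesis using q by (simp add: wrap_nil right_ideal.gen)
    next
      case False
      have "alg_map \<phi> q \<in> I" using q by (simp add: right_ideal.gen)
      then have "sg_mult (alg_map \<phi> q) (sdelta (\<phi> v)) \<in> I"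
        using sdelta_alg by (rule right_ideal.rmult)
      then show ?thesis using alg_map_wrap[OF qf False] q by simp
    qed
  next
    case p
    then obtain l r where lr: "p = word_monom l - word_monom r" "(l, r) \<in> R" unfolding P_def by auto
    have ne: "l \<noteq> []" "r \<noteq> []" using lr R_ne by auto
    have "(w @ l @ v, w @ r @ v) \<in> cong_step R" unfolding cong_step_def using lr by blast
    then have "(w @ l @ v, w @ r @ v) \<in> cong_gen R" unfolding cong_gen_def by blast
    then have eq: "\<phi> (w @ l @ v) = \<phi> (w @ r @ v)" using ker ne by simp
    have f1: "finite (supp (word_monom (w @ l @ v) :: 'x list \<Rightarrow> 'k))"
      and f2: "finite (supp (word_monom (w @ r @ v) :: 'x list \<Rightarrow> 'k))"
      using monom_fin[of "w @ l @ v"] monom_fin[of "w @ r @ v"] ne unfolding fin_poly_def by auto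
    have "alg_map \<phi> b = alg_map \<phi> (word_monom (w @ l @ v) - word_monom (w @ r @ v) :: 'x list \<Rightarrow> 'k)"
      unfolding p(2) lr(1) wrap_monom by (rule refl)
    also have "\<dots> = alg_map \<phi> (word_monom (w @ l @ v) :: 'x list \<Rightarrow> 'k) - alg_map \<phi> (word_monom (w @ r @ v))"
      by (rule alg_map_diff[OF f1 f2])
    also have "\<dots> = 0" unfolding alg_map_monom eq by simp
    finally show ?thesis by (simp add: right_ideal.zero)
  qed
qed

lemma L_ideal: "l \<in> L \<Longrightarrow> alg_map \<phi> l \<in> I"
proof (induction rule: L.induct)
  case L0
  have "alg_map \<phi> 0 \<in> I" by (simp add: alg_map_zero right_ideal.zero)
  then show ?case by (simp add: zero_fun_def)
next
  case (Lstep l b c)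
  have lf: "l \<in> fin_poly" using Lstep L_fin by blast
  have bf: "b \<in> fin_poly" using Lstep W_fin by blast
  then have bsf: "scal c b \<in> fin_poly" by (rule fin_poly_scal)
  have "alg_map \<phi> (l + scal c b) = alg_map \<phi> l + scal c (alg_map \<phi> b)"
    using alg_map_add[of l "scal c b" \<phi>] alg_map_scal[of b \<phi> c] lf bsf bf unfolding fin_poly_def by simp
  moreover have "scal c (alg_map \<phi> b) \<in> I" using W_ideal[OF \<open>b \<in> W\<close>] by (rule right_ideal.smult)
  ultimately show ?case using Lstep right_ideal.add by metis
qed

lemma wrap_L: "l \<in> L \<Longrightarrow> wrap [] l v \<in> L"
proof (induction rule: L.induct)
  case L0
  have "wrap [] 0 v \<in> L" by (simp add: wrap_zero L.L0)
  then show ?case by (simp add: zero_fun_def)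
next
  case (Lstep l b c)
  have "wrap [] b v \<in> W"
  proof -
    from Lstep(2) consider (q) q v' where "q \<in> Q" "b = wrap [] q v'" | (p) w p v' where "p \<in> P" "b = wrap w p v'"
      unfolding W_def by blast
    then show ?thesis
    proof cases
      case q
      then have "wrap [] b v = wrap [] q (v' @ v)" by (simp add: wrap_wrap)
      then show ?thesis unfolding W_def using q by blast
    next
      case p
      then have "wrap [] b v = wrap w p (v' @ v)" by (simp add: wrap_wrap)
      then show ?thesis unfolding W_def using p by blast
    qed
  qed
  moreover have "wrap [] (l + scal c b) v = wrap [] l v + scal c (wrap [] b v)"
    by (simp add: wrap_add wrap_scal)
  ultimately show ?case using Lstep L.Lstep by metis
qed

definition rep :: "'s \<Rightarrow> 'x list" where
  "rep s = (SOME u. u \<noteq> [] \<and> \<phi> u = s)"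

lemma rep: "rep s \<noteq> [] \<and> \<phi> (rep s) = s"
  unfolding rep_def using someI_ex[of "\<lambda>u. u \<noteq> [] \<and> \<phi> u = s"] surj by blast

definition lift :: "('s \<Rightarrow> 'k) \<Rightarrow> 'x list \<Rightarrow> 'k" where
  "lift a = (\<lambda>m. if m \<noteq> [] \<and> rep (\<phi> m) = m then a (\<phi> m) else 0)"

lemma rmult_aux:
  assumes l: "l \<in> L" and S: "finite S"
  shows "supp b \<subseteq> S \<Longrightarrow> \<exists>l'\<in>L. sg_mult (alg_map \<phi> l) b = alg_map \<phi> l'"
  using S
proof (induction S arbitrary: b rule: finite_induct)
  case empty
  then have "b = 0" by (auto simp: fun_eq_iff)
  have "sg_mult (alg_map \<phi> l) 0 = alg_map \<phi> 0" by (simp add: sg_mult_zero2 alg_map_zero)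
  then show ?case using L.L0 \<open>b = 0\<close> by blast
next
  case (insert x S)
  define b1 where "b1 = b(x := 0)"
  have "supp b1 \<subseteq> S" using insert.prems unfolding b1_def by auto
  then obtain l1 where l1: "l1 \<in> L" "sg_mult (alg_map \<phi> l) b1 = alg_map \<phi> l1" using insert.IH by blast
  have bdec: "b = b1 + scal (b x) (sdelta x)"
    unfolding b1_def by (auto simp: fun_eq_iff scal_def sdelta_def)
  have lf: "l \<in> fin_poly" using l L_fin by blast
  have fa: "finite (supp (alg_map \<phi> l))" using alg_map_fin[of l \<phi>] lf unfolding fin_poly_def sg_alg_def by auto
  have fb1: "finite (supp b1)" using \<open>supp b1 \<subseteq> S\<close> insert.hyps(1) by (auto intro: finite_subset)
  have fd: "finite (supp (sdelta x :: 's \<Rightarrow> 'k))" using sdelta_alg[of x] unfolding sg_alg_def by auto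
  have fsd: "finite (supp (scal (b x) (sdelta x) :: 's \<Rightarrow> 'k))" using fd by (auto intro: finite_subset simp: scal_def)
  have rx: "rep x \<noteq> []" "\<phi> (rep x) = x" using rep by auto
  have "sg_mult (alg_map \<phi> l) b = sg_mult (alg_map \<phi> l) b1 + scal (b x) (sg_mult (alg_map \<phi> l) (sdelta x))"
    using bdec sg_mult_add2[OF fa fb1 fsd] sg_mult_scal2[OF fa fd] by metis
  also have "sg_mult (alg_map \<phi> l) (sdelta x) = alg_map \<phi> (wrap [] l (rep x))"
    using alg_map_wrap[OF lf rx(1)] rx(2) by simp
  finally have eq0: "sg_mult (alg_map \<phi> l) b = sg_mult (alg_map \<phi> l) b1 + scal (b x) (alg_map \<phi> (wrap [] l (rep x)))" .
  have eq: "sg_mult (alg_map \<phi> l) b = alg_map \<phi> l1 + scal (b x) (alg_map \<phi> (wrap [] l (rep x)))"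
    using eq0 unfolding l1(2) .
  have wl: "wrap [] l (rep x) \<in> L" using wrap_L[OF l] .
  have l'L: "l1 + scal (b x) (wrap [] l (rep x)) \<in> L" using L_add[OF L_scal[OF wl] l1(1)] .
  have f1: "finite (supp l1)" using L_fin[OF l1(1)] unfolding fin_poly_def by auto
  have f2: "finite (supp (wrap [] l (rep x)))" using L_fin[OF wl] unfolding fin_poly_def by auto
  have f3: "finite (supp (scal (b x) (wrap [] l (rep x))))" using f2 by (auto intro: finite_subset simp: scal_def)
  have "alg_map \<phi> (l1 + scal (b x) (wrap [] l (rep x))) = alg_map \<phi> l1 + alg_map \<phi> (scal (b x) (wrap [] l (rep x)))"
    by (rule alg_map_add[OF f1 f3])
  also have "alg_map \<phi> (scal (b x) (wrap [] l (rep x))) = scal (b x) (alg_map \<phi> (wrap [] l (rep x)))"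
    by (rule alg_map_scal[OF f2])
  finally have "alg_map \<phi> (l1 + scal (b x) (wrap [] l (rep x))) = alg_map \<phi> l1 + scal (b x) (alg_map \<phi> (wrap [] l (rep x)))" .
  then show ?case using eq l'L by metis
qed

lemma ideal_L: "a \<in> I \<Longrightarrow> \<exists>l\<in>L. a = alg_map \<phi> l"
proof (induction rule: right_ideal.induct)
  case (gen g)
  then obtain q where q: "q \<in> Q" "g = alg_map \<phi> q" by auto
  have "wrap [] q [] \<in> W" using q unfolding W_def by blast
  then have "q \<in> L" using W_L by (simp add: wrap_nil)
  then show ?case using q by blast
next
  case zero
  have "(0 :: 's \<Rightarrow> 'k) = alg_map \<phi> (0 :: 'x list \<Rightarrow> 'k)" by (rule alg_map_zero[symmetric])
  then have "\<exists>l\<in>L. (0 :: 's \<Rightarrow> 'k) = alg_map \<phi> l" using L.L0 by blast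
  then show ?case by (simp add: zero_fun_def)
next
  case (add a b)
  then obtain la lb where "la \<in> L" "a = alg_map \<phi> la" "lb \<in> L" "b = alg_map \<phi> lb" by blast
  moreover have "finite (supp la)" "finite (supp lb)" using calculation L_fin unfolding fin_poly_def by auto
  ultimately show ?case using L_add alg_map_add by metis
next
  case (smult a c)
  then obtain la where "la \<in> L" "a = alg_map \<phi> la" by blast
  moreover have "finite (supp la)" using calculation L_fin unfolding fin_poly_def by auto
  ultimately show ?case using L_scal alg_map_scal by metis
next
  case (rmult a b)
  then obtain la where la: "la \<in> L" "a = alg_map \<phi> la" by blast
  have "finite (supp b)" using rmult.hyps(2) unfolding sg_alg_def by auto
  then show ?case using rmult_aux[OF la(1)] la(2) by blast
qed


lemma lift_add: "lift (a + b) = lift a + lift b"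
  unfolding lift_def by (simp add: fun_eq_iff)

lemma lift_scal: "lift (scal c a) = scal c (lift a)"
  unfolding lift_def by (simp add: fun_eq_iff scal_def)

lemma lift_zero: "lift 0 = 0"
  unfolding lift_def by (simp add: fun_eq_iff)

lemma lift_sdelta: "lift (sdelta t) = word_monom (rep t)"
proof (rule ext)
  fix m
  have rt: "rep t \<noteq> []" "\<phi> (rep t) = t" using rep by auto
  show "lift (sdelta t) m = word_monom (rep t) m"
  proof (cases "m = rep t")
    case True
    then show ?thesis using rt unfolding lift_def sdelta_def word_monom_def by simp
  next
    case False
    have "\<not> (m \<noteq> [] \<and> rep (\<phi> m) = m \<and> \<phi> m = t)" using False by auto
    then show ?thesis using False unfolding lift_def sdelta_def word_monom_def by auto
  qed
qed

lemma lift_nz: "lift a m \<noteq> 0 \<Longrightarrow> m \<noteq> [] \<and> rep (\<phi> m) = m \<and> lift a m = a (\<phi> m)"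
  unfolding lift_def by (cases "m \<noteq> [] \<and> rep (\<phi> m) = m") simp_all

lemma lift_rep: "lift a (rep s) = a s"
proof -
  have rs: "rep s \<noteq> []" "\<phi> (rep s) = s" using rep by auto
  then show ?thesis unfolding lift_def by simp
qed

lemma lift_fin: "a \<in> sg_alg \<Longrightarrow> lift a \<in> fin_poly"
proof -
  assume a: "a \<in> sg_alg"
  have "supp (lift a) \<subseteq> rep ` supp a"
  proof
    fix m assume "m \<in> supp (lift a)"
    then have "lift a m \<noteq> 0" by simp
    then have m: "rep (\<phi> m) = m" "a (\<phi> m) \<noteq> 0" using lift_nz[of a m] by auto
    show "m \<in> rep ` supp a"
    proof (rule image_eqI[where x="\<phi> m"])
      show "m = rep (\<phi> m)" using m by simp
      show "\<phi> m \<in> supp a" using m by simp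
    qed
  qed
  moreover have "finite (rep ` supp a)" using a unfolding sg_alg_def by simp
  ultimately have "finite (supp (lift a))" by (rule finite_subset)
  moreover have "lift a [] = 0" unfolding lift_def by simp
  ultimately show ?thesis unfolding fin_poly_def by simp
qed

lemma alg_map_lift: "a \<in> sg_alg \<Longrightarrow> alg_map \<phi> (lift a) = a"
proof (rule ext)
  fix s assume a: "a \<in> sg_alg"
  have f: "finite (supp (lift a))" using lift_fin[OF a] unfolding fin_poly_def by simp
  have "alg_map \<phi> (lift a) s = sum (lift a) {m\<in>supp (lift a). \<phi> m = s}"
    by (rule alg_map_eq[OF f]) simp
  also have "\<dots> = a s"
  proof (cases "a s = 0")
    case True
    have E: "{m\<in>supp (lift a). \<phi> m = s} = {}"
    proof (rule equals0I)
      fix m assume "m \<in> {m\<in>supp (lift a). \<phi> m = s}"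
      then have "lift a m \<noteq> 0" "\<phi> m = s" by auto
      then show False using lift_nz[of a m] True by auto
    qed
    show ?thesis unfolding E True by (simp only: sum.empty)
  next
    case False
    have E: "{m\<in>supp (lift a). \<phi> m = s} = {rep s}"
    proof
      show "{m\<in>supp (lift a). \<phi> m = s} \<subseteq> {rep s}"
      proof
        fix m assume "m \<in> {m\<in>supp (lift a). \<phi> m = s}"
        then have "lift a m \<noteq> 0" "\<phi> m = s" by auto
        then show "m \<in> {rep s}" using lift_nz[of a m] by auto
      qed
      have "lift a (rep s) \<noteq> 0" "\<phi> (rep s) = s" using lift_rep[of a s] False rep by auto
      then show "{rep s} \<subseteq> {m\<in>supp (lift a). \<phi> m = s}" by simp
    qed
    show ?thesis unfolding E using lift_rep[of a s] by simp
  qed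
  finally show "alg_map \<phi> (lift a) s = a s" .
qed

lemma cstep_L: "(y, z) \<in> cong_step R \<Longrightarrow> (word_monom y - word_monom z :: 'x list \<Rightarrow> 'k) \<in> L"
proof -
  assume "(y, z) \<in> cong_step R"
  then obtain w l r v where wl: "y = w @ l @ v" "z = w @ r @ v" "(l, r) \<in> R"
    unfolding cong_step_def by blast
  have "(word_monom l - word_monom r :: 'x list \<Rightarrow> 'k) \<in> P" unfolding P_def using wl(3) by blast
  then have "wrap w (word_monom l - word_monom r :: 'x list \<Rightarrow> 'k) v \<in> W" unfolding W_def by blast
  then have "wrap w (word_monom l - word_monom r :: 'x list \<Rightarrow> 'k) v \<in> L" by (rule W_L)
  then show ?thesis unfolding wrap_monom wl .
qed

lemma diff_telescope: "(a::'a::ab_group_add) - b + (b - c) = a - c"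
  by simp

lemma cstep2_L: "(y, z) \<in> cong_step R \<union> (cong_step R)\<inverse> \<Longrightarrow> (word_monom y - word_monom z :: 'x list \<Rightarrow> 'k) \<in> L"
proof -
  assume a: "(y, z) \<in> cong_step R \<union> (cong_step R)\<inverse>"
  show ?thesis
  proof (cases "(y, z) \<in> cong_step R")
    case True then show ?thesis by (rule cstep_L)
  next
    case False
    then have "(z, y) \<in> cong_step R" using a by blast
    then have "(word_monom z - word_monom y :: 'x list \<Rightarrow> 'k) \<in> L" by (rule cstep_L)
    then have "- (word_monom z - word_monom y :: 'x list \<Rightarrow> 'k) \<in> L" by (rule L_neg)
    then show ?thesis by (simp only: minus_diff_eq)
  qed
qed

lemma cong_L: "(u, v) \<in> cong_gen R \<Longrightarrow> (word_monom u - word_monom v :: 'x list \<Rightarrow> 'k) \<in> L"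
proof -
  assume "(u, v) \<in> cong_gen R"
  then have "(u, v) \<in> (cong_step R \<union> (cong_step R)\<inverse>)\<^sup>*" unfolding cong_gen_def .
  then show ?thesis
  proof (induction rule: rtrancl_induct)
    case base
    have "(0 :: 'x list \<Rightarrow> 'k) \<in> L" by (rule L.L0)
    then show ?case by (simp only: diff_self)
  next
    case (step y z)
    have "(word_monom u - word_monom y) + (word_monom y - word_monom z :: 'x list \<Rightarrow> 'k) \<in> L"
      using L_add[OF cstep2_L[OF step.hyps(2)] step.IH] .
    then show ?case by (simp only: diff_telescope)
  qed
qed

lemma kernel_aux:
  assumes S: "finite S"
  shows "\<forall>f. f \<in> fin_poly \<longrightarrow> supp f \<subseteq> S \<longrightarrow> (f :: 'x list \<Rightarrow> 'k) - lift (alg_map \<phi> f) \<in> L"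
  using S
proof (induction S rule: finite_induct)
  case empty
  show ?case
  proof (intro allI impI)
    fix f :: "'x list \<Rightarrow> 'k" assume "f \<in> fin_poly" "supp f \<subseteq> {}"
    then have f0: "f = 0" by (auto simp: fun_eq_iff)
    have "(0 :: 'x list \<Rightarrow> 'k) - lift (alg_map \<phi> (0 :: 'x list \<Rightarrow> 'k)) = 0"
      by (simp only: alg_map_zero lift_zero diff_self)
    then show "f - lift (alg_map \<phi> f) \<in> L" using f0 L.L0 by simp
  qed
next
  case (insert x S)
  show ?case
  proof (intro allI impI)
    fix f :: "'x list \<Rightarrow> 'k" assume f: "f \<in> fin_poly" "supp f \<subseteq> insert x S"
    define f1 where "f1 = f(x := 0)"
    have f1S: "supp f1 \<subseteq> S" using f(2) unfolding f1_def by auto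
    have f1f: "f1 \<in> fin_poly"
    proof -
      have "finite (supp f1)" using f1S insert.hyps(1) by (rule finite_subset)
      moreover have "f1 [] = 0" using f unfolding f1_def fin_poly_def by auto
      ultimately show ?thesis unfolding fin_poly_def by simp
    qed
    have IH: "f1 - lift (alg_map \<phi> f1) \<in> L" using insert.IH f1f f1S by blast
    show "f - lift (alg_map \<phi> f) \<in> L"
    proof (cases "f x = 0")
      case True
      then have "f = f1" unfolding f1_def by auto
      then show ?thesis using IH by simp
    next
      case False
      then have xne: "x \<noteq> []" using f unfolding fin_poly_def by auto
      have mf: "(word_monom x :: 'x list \<Rightarrow> 'k) \<in> fin_poly" using monom_fin[OF xne] .
      have dec: "f = f1 + scal (f x) (word_monom x)"
        unfolding f1_def by (auto simp: fun_eq_iff scal_def word_monom_def)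
      have ff1: "finite (supp f1)" using f1f unfolding fin_poly_def by simp
      have fm: "finite (supp (word_monom x :: 'x list \<Rightarrow> 'k))" using mf unfolding fin_poly_def by simp
      have fsm: "finite (supp (scal (f x) (word_monom x :: 'x list \<Rightarrow> 'k)))"
        using fin_poly_scal[OF mf] unfolding fin_poly_def by simp
      have "alg_map \<phi> f = alg_map \<phi> f1 + alg_map \<phi> (scal (f x) (word_monom x))"
        using dec alg_map_add[OF ff1 fsm] by metis
      also have "alg_map \<phi> (scal (f x) (word_monom x :: 'x list \<Rightarrow> 'k)) = scal (f x) (sdelta (\<phi> x))"
        using alg_map_scal[OF fm] alg_map_monom by metis
      finally have am: "alg_map \<phi> f = alg_map \<phi> f1 + scal (f x) (sdelta (\<phi> x))" .
      have "lift (alg_map \<phi> f) = lift (alg_map \<phi> f1) + scal (f x) (word_monom (rep (\<phi> x)))"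
        unfolding am lift_add lift_scal lift_sdelta ..
      moreover have "scal (f x) (word_monom x - word_monom (rep (\<phi> x)) :: 'x list \<Rightarrow> 'k)
          = scal (f x) (word_monom x) - scal (f x) (word_monom (rep (\<phi> x)))"
        by (simp add: scal_def fun_eq_iff algebra_simps)
      ultimately have eq: "f - lift (alg_map \<phi> f) = (f1 - lift (alg_map \<phi> f1)) + scal (f x) (word_monom x - word_monom (rep (\<phi> x)))"
        using dec by (simp only: algebra_simps)
      have rx: "rep (\<phi> x) \<noteq> []" "\<phi> (rep (\<phi> x)) = \<phi> x" using rep by auto
      then have "(x, rep (\<phi> x)) \<in> cong_gen R" using ker xne by metis
      then have "(word_monom x - word_monom (rep (\<phi> x)) :: 'x list \<Rightarrow> 'k) \<in> L" by (rule cong_L)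
      then have "scal (f x) (word_monom x - word_monom (rep (\<phi> x)) :: 'x list \<Rightarrow> 'k) \<in> L" by (rule L_scal)
      then show ?thesis unfolding eq using L_add IH by blast
    qed
  qed
qed

lemma kernel: "(f :: 'x list \<Rightarrow> 'k) \<in> fin_poly \<Longrightarrow> alg_map \<phi> f = 0 \<Longrightarrow> f \<in> L"
proof -
  assume f: "f \<in> fin_poly" and z: "alg_map \<phi> f = 0"
  have "finite (supp f)" using f unfolding fin_poly_def by simp
  then have "f - lift (alg_map \<phi> f) \<in> L" using kernel_aux f by blast
  then show ?thesis unfolding z lift_zero by simp
qed

lemma main_char:
  assumes f: "(f :: 'x list \<Rightarrow> 'k) \<in> fin_poly" and g: "g \<in> fin_poly"
  shows "(f, g) \<in> red_equiv gt Q P \<longleftrightarrow> alg_map \<phi> f - alg_map \<phi> g \<in> I"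
proof -
  have ff: "finite (supp f)" and fg: "finite (supp g)" using f g unfolding fin_poly_def by auto
  have amd: "alg_map \<phi> (f - g) = alg_map \<phi> f - alg_map \<phi> g" by (rule alg_map_diff[OF ff fg])
  show ?thesis
  proof
    assume "(f, g) \<in> red_equiv gt Q P"
    then have "(f, g) \<in> E\<^sup>*" unfolding red_equiv_def by simp
    then have "g - f \<in> L" by (rule E_L)
    then have "- (g - f) \<in> L" by (rule L_neg)
    then have "f - g \<in> L" by simp
    then have "alg_map \<phi> (f - g) \<in> I" by (rule L_ideal)
    then show "alg_map \<phi> f - alg_map \<phi> g \<in> I" unfolding amd .
  next
    assume "alg_map \<phi> f - alg_map \<phi> g \<in> I"
    then have "alg_map \<phi> (f - g) \<in> I" unfolding amd .
    then obtain l where l: "l \<in> L" "alg_map \<phi> (f - g) = alg_map \<phi> l" using ideal_L by blast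
    have lf: "l \<in> fin_poly" using L_fin[OF l(1)] .
    have fgf: "f - g \<in> fin_poly" using fin_poly_diff[OF f g] .
    have "alg_map \<phi> ((f - g) - l) = alg_map \<phi> (f - g) - alg_map \<phi> l"
      by (rule alg_map_diff) (use fgf lf in \<open>auto simp: fin_poly_def\<close>)
    then have "alg_map \<phi> ((f - g) - l) = 0" using l(2) by simp
    then have "(f - g) - l \<in> L" using kernel fin_poly_diff[OF fgf lf] by blast
    then have "((f - g) - l) + l \<in> L" using L_add l(1) by blast
    then have "f - g \<in> L" by simp
    then have "- (f - g) \<in> L" by (rule L_neg)
    then have "g - f \<in> L" by simp
    then have "(f, f + (g - f)) \<in> E\<^sup>*" by (rule L_red)
    then have "(f, g) \<in> E\<^sup>*" by simp
    then show "(f, g) \<in> red_equiv gt Q P" unfolding red_equiv_def using f g by simp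
  qed
qed

end

theorem corollary3p5:
  fixes gt :: "'x list \<Rightarrow> 'x list \<Rightarrow> bool"
    and R :: "('x list \<times> 'x list) set"
    and \<phi> :: "'x list \<Rightarrow> 's::semigroup_mult"
    and Q :: "('x list \<Rightarrow> 'k::field) set"
  assumes gt: "semigroup_wellorder gt"
    and R_ne: "\<forall>(l, r)\<in>R. l \<noteq> [] \<and> r \<noteq> []"
    and hom: "\<forall>u v. u \<noteq> [] \<longrightarrow> v \<noteq> [] \<longrightarrow> \<phi> (u @ v) = \<phi> u * \<phi> v"
    and surj: "\<forall>s. \<exists>u. u \<noteq> [] \<and> \<phi> u = s"
    and ker: "\<forall>u v. u \<noteq> [] \<longrightarrow> v \<noteq> [] \<longrightarrow> (\<phi> u = \<phi> v \<longleftrightarrow> (u, v) \<in> cong_gen R)"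
    and Q: "Q \<subseteq> fin_poly"
  shows "\<exists>h. bij_betw h
     (sg_alg // {(a, b). a \<in> sg_alg \<and> b \<in> sg_alg \<and>
                  a - b \<in> right_ideal (alg_map \<phi> ` Q)})
     (fin_poly // red_equiv gt Q {word_monom l - word_monom r | l r. (l, r) \<in> R})"
proof -
  interpret c: cor_setup gt R \<phi> Q
    using gt R_ne hom surj ker Q by (simp add: cor_setup_def)
  let ?s = "{(a, b). a \<in> sg_alg \<and> b \<in> sg_alg \<and> a - b \<in> right_ideal (alg_map \<phi> ` Q)}"
  have FA: "alg_map \<phi> ` fin_poly = (sg_alg :: ('s \<Rightarrow> 'k) set)"
  proof
    show "alg_map \<phi> ` fin_poly \<subseteq> (sg_alg :: ('s \<Rightarrow> 'k) set)"
      using alg_map_fin unfolding fin_poly_def by blast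
    show "(sg_alg :: ('s \<Rightarrow> 'k) set) \<subseteq> alg_map \<phi> ` fin_poly"
    proof
      fix a :: "'s \<Rightarrow> 'k" assume "a \<in> sg_alg"
      then have "a = alg_map \<phi> (c.lift a)" "c.lift a \<in> fin_poly"
        using c.alg_map_lift c.lift_fin by auto
      then show "a \<in> alg_map \<phi> ` fin_poly" by blast
    qed
  qed
  have sB: "?s \<subseteq> sg_alg \<times> sg_alg" by auto
  have r: "red_equiv gt Q {word_monom l - word_monom r | l r. (l, r) \<in> R}
      = {(f, g). f \<in> fin_poly \<and> g \<in> fin_poly \<and> (alg_map \<phi> f, alg_map \<phi> g) \<in> ?s}"
  proof -
    have "(f, g) \<in> red_equiv gt Q c.P \<longleftrightarrow> f \<in> fin_poly \<and> g \<in> fin_poly \<and> (alg_map \<phi> f, alg_map \<phi> g) \<in> ?s"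
      for f g :: "'x list \<Rightarrow> 'k"
    proof (cases "f \<in> fin_poly \<and> g \<in> fin_poly")
      case True
      then have "alg_map \<phi> f \<in> sg_alg" "alg_map \<phi> g \<in> sg_alg" using FA by auto
      then show ?thesis using c.main_char True by simp
    next
      case False
      then show ?thesis unfolding red_equiv_def by auto
    qed
    then show ?thesis unfolding c.P_def by auto
  qed
  show ?thesis using quot_bij[OF FA sB r] .
qed

end
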